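(* Let $X\subset\mathbb{R}_+$ be a Borel set with $0\in X$, let $\kappa\ge0$ and $\delta\in(0,1)$, and let $x_0>0$ satisfy $x_0\ge\frac{2\delta\kappa}{1-\delta}$. Let $\bar p$ be the stationary decision rule with $\bar p(y)=\frac{1-\delta}{2-\delta}$ for all $y\ge x_0$. Then: (a) $R_{\bar p}(x_0)\ge 1/4$; (b) if $\sup X=\infty$, then $\bar p$ is dynamically robust, i.e. $R_{\bar p}(x_0)=\sup_pR_p(x_0)$, the supremum being over all stationary decision rules.
   Context: Search with additive-multiplicative costs. Fix a Borel set $X\subset\mathbb{R}_+$ with $0\in X$, an additive cost $\kappa\ge 0$ and a discount factor $\delta\in(0,1]$ with $\kappa+(1-\delta)>0$, and an outside option $x_0>0$. An environment is a probability distribution $F$ on $X$; alternatives $x_1,x_2,\dots$ are i.i.d. with law $F$, and the best-so-far alternative after round $t$ is $y_t=\max\{x_0,\dots,x_t\}$. In each round the individual either stops and consumes the best-so-far alternative, or proceeds to the next round, incurring cost $\kappa$ with all future payoffs discounted by $\delta$; thus stopping at round $t\ge1$ yields, from the perspective of round $0$, $-(\delta+\dots+\delta^t)\kappa+\delta^ty_t$. A stationary decision rule is a function $p$ giving the stopping probability $p(y)\in[0,1]$ as a function of the current best-so-far alternative $y$. For an environment $F$ and a current best-so-far alternative $y$, $U_p(F,y)$ denotes the expected payoff of $p$, which satisfies $U_p(F,y)=p(y)y+(1-p(y))\delta\big(-\kappa+\int U_p(F,\max\{y,x\})\,dF(x)\big)$, and $V(F,y)$ is the optimal (supremal) expected payoff,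 satisfying $V(F,y)=\max_{q\in[0,1]}\big(qy+(1-q)\delta(-\kappa+\int V(F,\max\{y,x\})\,dF(x))\big)$. A binary environment $F_{(z,\sigma)}$ is the lottery giving $0$ with probability $1-\sigma$ and $z$ with probability $\sigma$; $\mathcal B_X=\{F_{(z,\sigma)}:z\in X,\sigma\in[0,1]\}$. The performance ratio of $p$ is $R_p(x_0)=\inf_{y\ge x_0}\inf_{F\in\mathcal B_X}U_p(F,y)/V(F,y)$. *)

theory Defs
  imports "HOL-Probability.Probability"
begin

text \<open>An environment is a
probability measure F on the reals (supported on X). A stationary decision
rule p maps the best-so-far alternative y to a stopping probability.\<close>

definition stationary_rule :: "(real \<Rightarrow> real) \<Rightarrow> bool" where
  "stationary_rule p \<longleftrightarrow> (\<forall>y. 0 \<le> p y \<and> p y \<le> 1)"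

definition U :: "real \<Rightarrow> real \<Rightarrow> (real \<Rightarrow> real) \<Rightarrow> real measure \<Rightarrow> real \<Rightarrow> real" where
  "U \<kappa> \<delta> p F = (THE f. \<forall>y. f y =
      p y * y + (1 - p y) * (\<delta> * (- \<kappa> + (\<integral>x. f (max y x) \<partial>F))))"

definition V :: "real \<Rightarrow> real \<Rightarrow> real measure \<Rightarrow> real \<Rightarrow> real" where
  "V \<kappa> \<delta> F = (THE f. \<forall>y. f y =
      (SUP q\<in>{0..1::real}. q * y + (1 - q) * (\<delta> * (- \<kappa> + (\<integral>x. f (max y x) \<partial>F)))))"

definition binary_env :: "real \<Rightarrow> real \<Rightarrow> real measure" where
  "binary_env z \<sigma> = measure_pmf (map_pmf (\<lambda>b. if b then z else 0) (bernoulli_pmf \<sigma>))"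

definition binary_envs :: "real set \<Rightarrow> real measure set" where
  "binary_envs X = {binary_env z \<sigma> | z \<sigma>. z \<in> X \<and> 0 \<le> \<sigma> \<and> \<sigma> \<le> 1}"

definition perf_ratio :: "real \<Rightarrow> real \<Rightarrow> real set \<Rightarrow> (real \<Rightarrow> real) \<Rightarrow> real \<Rightarrow> real" where
  "perf_ratio \<kappa> \<delta> X p x0 =
     Inf {U \<kappa> \<delta> p F y / V \<kappa> \<delta> F y | y F. x0 \<le> y \<and> F \<in> binary_envs X}"

definition dynamically_robust :: "real \<Rightarrow> real \<Rightarrow> real set \<Rightarrow> (real \<Rightarrow> real) \<Rightarrow> real \<Rightarrow> bool" where
  "dynamically_robust \<kappa> \<delta> X p x0 \<longleftrightarrow>
     perf_ratio \<kappa> \<delta> X p x0 = (SUP p'\<in>{p'. stationary_rule p'}. perf_ratio \<kappa> \<delta> X p' x0)"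

end

theory Submission
  imports Defs
begin


lemma binary_integral:
  assumes "0 \<le> \<sigma>" "\<sigma> \<le> 1"
  shows "(\<integral>x. f (max y x) \<partial>binary_env z \<sigma>) = (1 - \<sigma>) * f (max y 0) + \<sigma> * f (max y z)"
  using assms unfolding binary_env_def by (simp add: algebra_simps)

lemma sup_lin:
  fixes y C :: real
  shows "(SUP q\<in>{0..1::real}. q * y + (1 - q) * C) = max y C"
proof (rule cSup_eq_maximum)
  show "max y C \<in> (\<lambda>q. q * y + (1 - q) * C) ` {0..1}"
  proof (cases "C \<le> y")
    case True then show ?thesis by (auto intro!: image_eqI[where x=1])
  next
    case False then show ?thesis by (auto intro!: image_eqI[where x=0])
  qed
next
  fix x assume "x \<in> (\<lambda>q. q * y + (1 - q) * C) ` {0..1::real}"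
  then obtain q where q: "0 \<le> q" "q \<le> 1" "x = q * y + (1 - q) * C" by auto
  have "q * y \<le> q * max y C" using q by (intro mult_left_mono) auto
  moreover have "(1-q) * C \<le> (1-q) * max y C" using q by (intro mult_left_mono) auto
  ultimately show "x \<le> max y C" using q by (simp add: algebra_simps)
qed



lemma P1:
  fixes a b y z K :: real
  assumes "a > 0" "b \<ge> 0" "K \<ge> 0" "2*K \<le> a*y" "y < z"
  shows "2*a*(2*a+b)*y \<le> 4*(2*a*(a*y-K) + b*(a*z-K))"
proof -
  have "a*(a*y - 2*K) \<ge> 0" using assms by simp
  moreover have "b*(a*y - 2*K) \<ge> 0" using assms by simp
  moreover have "a*b*(z-y) \<ge> 0" using assms by simp
  ultimately show ?thesis by (simp add: algebra_simps)
qed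

lemma P2:
  fixes a b y z K :: real
  assumes "a > 0" "b \<ge> 0" "K \<ge> 0" "2*K \<le> a*y" "y < z"
  shows "2*a*(2*a+b)*(b*z-K) \<le> 4*(a+b)*(2*a*(a*y-K) + b*(a*z-K))"
proof -
  have "a*(a+b)*(a*y - 2*K) \<ge> 0" using assms by simp
  moreover have "a*y \<le> a*z" using assms by simp
  then have "a*z - 2*K \<ge> 0" using assms(4) by linarith
  then have "b*b*(a*z - 2*K) \<ge> 0" using assms by simp
  moreover have "a*a*K \<ge> 0" "a*b*K \<ge> 0" using assms by simp_all
  ultimately show ?thesis by (simp add: algebra_simps)
qed



lemma lin_solve:
  fixes x A B :: real
  assumes "B < 1"
  shows "(x = A + B * x) \<longleftrightarrow> (x = A / (1 - B))"
  using assms by (auto simp: field_simps)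

definition hU :: "real \<Rightarrow> real \<Rightarrow> (real \<Rightarrow> real) \<Rightarrow> real \<Rightarrow> real" where
  "hU \<kappa> \<delta> p y = (p y * y - (1 - p y) * \<delta> * \<kappa>) / (1 - (1 - p y) * \<delta>)"

definition mU :: "real \<Rightarrow> real \<Rightarrow> (real \<Rightarrow> real) \<Rightarrow> real \<Rightarrow> real \<Rightarrow> real \<Rightarrow> real" where
  "mU \<kappa> \<delta> p z \<sigma> y = (p y * y + (1 - p y) * \<delta> * (- \<kappa> + \<sigma> * hU \<kappa> \<delta> p z)) /
      (1 - (1 - p y) * \<delta> * (1 - \<sigma>))"

definition Uf :: "real \<Rightarrow> real \<Rightarrow> (real \<Rightarrow> real) \<Rightarrow> real \<Rightarrow> real \<Rightarrow> real \<Rightarrow> real" where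
  "Uf \<kappa> \<delta> p z \<sigma> y = (if z \<le> y then hU \<kappa> \<delta> p y else if 0 \<le> y then mU \<kappa> \<delta> p z \<sigma> y
     else p y * y + (1 - p y) * (\<delta> * (- \<kappa> + ((1 - \<sigma>) *
       (if z \<le> 0 then hU \<kappa> \<delta> p 0 else mU \<kappa> \<delta> p z \<sigma> 0) + \<sigma> * hU \<kappa> \<delta> p z))))"

lemma U_binary:
  assumes st: "stationary_rule p" and d: "0 < \<delta>" "\<delta> < 1" and z: "0 \<le> z"
    and s: "0 \<le> \<sigma>" "\<sigma> \<le> 1"
  shows "U \<kappa> \<delta> p (binary_env z \<sigma>) = Uf \<kappa> \<delta> p z \<sigma>"
proof -
  have p: "0 \<le> p y" "p y \<le> 1" for y using st unfolding stationary_rule_def by auto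
  have B1: "(1 - p y) * \<delta> < 1" for y
  proof -
    have "(1 - p y) * \<delta> \<le> 1 * \<delta>" using p[of y] d by (intro mult_right_mono) auto
    then show ?thesis using d by linarith
  qed
  have B2: "(1 - p y) * \<delta> * (1 - \<sigma>) < 1" for y
  proof -
    have "(1 - p y) * \<delta> * (1 - \<sigma>) \<le> (1 - p y) * \<delta> * 1"
      using p[of y] d s by (intro mult_left_mono) auto
    then show ?thesis using B1[of y] by linarith
  qed
  let ?E = "\<lambda>f. \<forall>y. f y = p y * y + (1 - p y) * (\<delta> * (- \<kappa> + (\<integral>x. f (max y x) \<partial>binary_env z \<sigma>)))"
  have E: "?E f \<longleftrightarrow> (\<forall>y. f y = p y * y + (1 - p y) * (\<delta> * (- \<kappa> + ((1 - \<sigma>) * f (max y 0) + \<sigma> * f (max y z)))))" for f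
    using s by (simp add: binary_integral)
  have hU_eq: "hU \<kappa> \<delta> p y = (p y * y - (1 - p y) * \<delta> * \<kappa>) + ((1 - p y) * \<delta>) * hU \<kappa> \<delta> p y" for y
    using lin_solve[OF B1[of y]] unfolding hU_def by blast
  have mU_eq: "mU \<kappa> \<delta> p z \<sigma> y = (p y * y + (1 - p y) * \<delta> * (- \<kappa> + \<sigma> * hU \<kappa> \<delta> p z))
      + ((1 - p y) * \<delta> * (1 - \<sigma>)) * mU \<kappa> \<delta> p z \<sigma> y" for y
    using lin_solve[OF B2[of y]] unfolding mU_def by blast
  show ?thesis unfolding U_def
  proof (rule the_equality)
    show "?E (Uf \<kappa> \<delta> p z \<sigma>)" unfolding E
    proof
      fix y
      consider "z \<le> y" | "0 \<le> y" "y < z" | "y < 0" by linarith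
      then show "Uf \<kappa> \<delta> p z \<sigma> y = p y * y + (1 - p y) * (\<delta> * (- \<kappa> + ((1 - \<sigma>) * Uf \<kappa> \<delta> p z \<sigma> (max y 0) + \<sigma> * Uf \<kappa> \<delta> p z \<sigma> (max y z))))"
      proof cases
        case 1
        then have "max y 0 = y" "max y z = y" using z by auto
        then show ?thesis using 1 hU_eq[of y] by (simp add: Uf_def algebra_simps)
      next
        case 2
        then have "max y 0 = y" "max y z = z" by auto
        then show ?thesis using 2 mU_eq[of y] by (simp add: Uf_def algebra_simps)
      next
        case 3
        then have "max y 0 = 0" "max y z = z" using z by auto
        then show ?thesis using 3 z by (simp add: Uf_def)
      qed
    qed
  next
    fix f assume "?E f"
    then have H: "f y = p y * y + (1 - p y) * (\<delta> * (- \<kappa> + ((1 - \<sigma>) * f (max y 0) + \<sigma> * f (max y z))))" for y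
      unfolding E by blast
    have h1: "f y = hU \<kappa> \<delta> p y" if "z \<le> y" for y
    proof -
      have "max y 0 = y" "max y z = y" using z that by auto
      then have "f y = (p y * y - (1 - p y) * \<delta> * \<kappa>) + ((1 - p y) * \<delta>) * f y"
        using H[of y] by (simp add: algebra_simps)
      then show ?thesis using lin_solve[OF B1[of y]] unfolding hU_def by blast
    qed
    have h2: "f y = mU \<kappa> \<delta> p z \<sigma> y" if "0 \<le> y" "y < z" for y
    proof -
      have "max y 0 = y" "max y z = z" using that by auto
      then have "f y = (p y * y + (1 - p y) * \<delta> * (- \<kappa> + \<sigma> * hU \<kappa> \<delta> p z))
         + ((1 - p y) * \<delta> * (1 - \<sigma>)) * f y"
        using H[of y] h1[of z] by (simp add: algebra_simps)
      then show ?thesis using lin_solve[OF B2[of y]] unfolding mU_def by blast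
    qed
    show "f = Uf \<kappa> \<delta> p z \<sigma>"
    proof
      fix y
      consider "z \<le> y" | "0 \<le> y" "y < z" | "y < 0" by linarith
      then show "f y = Uf \<kappa> \<delta> p z \<sigma> y"
      proof cases
        case 1 then show ?thesis using h1 by (simp add: Uf_def)
      next
        case 2 then show ?thesis using h2 by (simp add: Uf_def)
      next
        case 3
        then have "max y 0 = 0" "max y z = z" using z by auto
        moreover have "f 0 = (if z \<le> 0 then hU \<kappa> \<delta> p 0 else mU \<kappa> \<delta> p z \<sigma> 0)"
          using h1[of 0] h2[of 0] by auto
        ultimately show ?thesis using 3 z H[of y] h1[of z] by (simp add: Uf_def)
      qed
    qed
  qed
qed



definition Wst :: "real \<Rightarrow> real \<Rightarrow> real \<Rightarrow> real \<Rightarrow> real" where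
  "Wst \<kappa> \<delta> z \<sigma> = \<delta> * (\<sigma> * z - \<kappa>) / (1 - \<delta> + \<delta> * \<sigma>)"

definition Vf :: "real \<Rightarrow> real \<Rightarrow> real \<Rightarrow> real \<Rightarrow> real \<Rightarrow> real" where
  "Vf \<kappa> \<delta> z \<sigma> y = (if z \<le> y then y else if 0 \<le> y then max y (Wst \<kappa> \<delta> z \<sigma>)
     else max y (\<delta> * (- \<kappa> + ((1 - \<sigma>) * (if z \<le> 0 then 0 else max 0 (Wst \<kappa> \<delta> z \<sigma>)) + \<sigma> * z))))"

lemma V_binary:
  assumes k: "0 \<le> \<kappa>" and d: "0 < \<delta>" "\<delta> < 1" and z: "0 \<le> z"
    and s: "0 \<le> \<sigma>" "\<sigma> \<le> 1"
  shows "V \<kappa> \<delta> (binary_env z \<sigma>) = Vf \<kappa> \<delta> z \<sigma>"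
proof -
  define W where "W = Wst \<kappa> \<delta> z \<sigma>"
  define D where "D = 1 - \<delta> + \<delta> * \<sigma>"
  have Dpos: "D > 0" unfolding D_def using d s by (smt (verit) mult_nonneg_nonneg)
  have WD: "W * D = \<delta> * (\<sigma> * z - \<kappa>)" unfolding W_def Wst_def D_def[symmetric] using Dpos by simp
  have key: "\<delta> * (- \<kappa> + ((1 - \<sigma>) * t + \<sigma> * z)) - t = (W - t) * D" for t
    using WD unfolding D_def by (simp add: algebra_simps)
  have keyle: "\<delta> * (- \<kappa> + ((1 - \<sigma>) * t + \<sigma> * z)) \<le> t \<longleftrightarrow> W \<le> t" for t
  proof -
    have "\<delta> * (- \<kappa> + ((1 - \<sigma>) * t + \<sigma> * z)) \<le> t \<longleftrightarrow> (W - t) * D \<le> 0"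
      using key[of t] by linarith
    also have "\<dots> \<longleftrightarrow> W \<le> t" using Dpos by (simp add: mult_le_0_iff)
    finally show ?thesis .
  qed
  have keyeq: "\<delta> * (- \<kappa> + ((1 - \<sigma>) * W + \<sigma> * z)) = W" using key[of W] by simp
  have fixeq: "t = \<delta> * (- \<kappa> + ((1 - \<sigma>) * t + \<sigma> * z)) \<Longrightarrow> t = W" for t
    using key[of t] Dpos by simp
  let ?E = "\<lambda>f. \<forall>y. f y = (SUP q\<in>{0..1::real}. q * y + (1 - q) * (\<delta> * (- \<kappa> + (\<integral>x. f (max y x) \<partial>binary_env z \<sigma>))))"
  have E: "?E f \<longleftrightarrow> (\<forall>y. f y = max y (\<delta> * (- \<kappa> + ((1 - \<sigma>) * f (max y 0) + \<sigma> * f (max y z)))))" for f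
    using s by (simp add: binary_integral sup_lin)
  show ?thesis unfolding V_def
  proof (rule the_equality)
    show "?E (Vf \<kappa> \<delta> z \<sigma>)" unfolding E
    proof
      fix y
      consider "z \<le> y" | "0 \<le> y" "y < z" | "y < 0" by linarith
      then show "Vf \<kappa> \<delta> z \<sigma> y = max y (\<delta> * (- \<kappa> + ((1 - \<sigma>) * Vf \<kappa> \<delta> z \<sigma> (max y 0) + \<sigma> * Vf \<kappa> \<delta> z \<sigma> (max y z))))"
      proof cases
        case 1
        then have "max y 0 = y" "max y z = y" using z by auto
        moreover have "\<delta> * y \<le> y" using d 1 z by (intro mult_left_le_one_le) auto
        moreover have "\<delta> * \<kappa> \<ge> 0" using d k by simp
        ultimately show ?thesis using 1 by (simp add: Vf_def algebra_simps)
      next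
        case 2
        then have m: "max y 0 = y" "max y z = z" by auto
        show ?thesis
        proof (cases "W \<le> y")
          case True
          then show ?thesis using 2 m keyle[of y] by (simp add: Vf_def W_def[symmetric])
        next
          case False
          then show ?thesis using 2 m keyeq by (simp add: Vf_def W_def[symmetric])
        qed
      next
        case 3
        then have "max y 0 = 0" "max y z = z" using z by auto
        then show ?thesis using 3 z by (simp add: Vf_def)
      qed
    qed
  next
    fix f assume "?E f"
    then have H: "f y = max y (\<delta> * (- \<kappa> + ((1 - \<sigma>) * f (max y 0) + \<sigma> * f (max y z))))" for y
      unfolding E by blast
    have h1: "f y = y" if "z \<le> y" for y
    proof (rule ccontr)
      assume ne: "f y \<noteq> y"
      have "max y 0 = y" "max y z = y" using z that by auto
      then have fy: "f y = max y (\<delta> * (- \<kappa> + f y))" using H[of y] by (simp add: algebra_simps)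
      then have a: "f y = \<delta> * (- \<kappa> + f y)" "f y > y" using ne by (auto simp: max_def split: if_splits)
      then have "f y * (1 - \<delta>) = - \<delta> * \<kappa>" by (simp add: algebra_simps)
      moreover have "f y * (1 - \<delta>) > 0" using a z that d by simp
      moreover have "\<delta> * \<kappa> \<ge> 0" using d k by simp
      ultimately show False by linarith
    qed
    have h2: "f y = max y W" if "0 \<le> y" "y < z" for y
    proof -
      have "max y 0 = y" "max y z = z" using that by auto
      then have fy: "f y = max y (\<delta> * (- \<kappa> + ((1 - \<sigma>) * f y + \<sigma> * z)))"
        using H[of y] h1[of z] by simp
      show ?thesis
      proof (cases "f y = y")
        case True
        then have "\<delta> * (- \<kappa> + ((1 - \<sigma>) * y + \<sigma> * z)) \<le> y" using fy by (simp add: max_def split: if_splits)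
        then show ?thesis using keyle[of y] True by simp
      next
        case False
        then have "f y = \<delta> * (- \<kappa> + ((1 - \<sigma>) * f y + \<sigma> * z))" "f y > y"
          using fy by (auto simp: max_def split: if_splits)
        then show ?thesis using fixeq[of "f y"] by simp
      qed
    qed
    show "f = Vf \<kappa> \<delta> z \<sigma>"
    proof
      fix y
      consider "z \<le> y" | "0 \<le> y" "y < z" | "y < 0" by linarith
      then show "f y = Vf \<kappa> \<delta> z \<sigma> y"
      proof cases
        case 1 then show ?thesis using h1 by (simp add: Vf_def)
      next
        case 2 then show ?thesis using h2 by (simp add: Vf_def W_def)
      next
        case 3
        then have "max y 0 = 0" "max y z = z" using z by auto
        moreover have "f 0 = (if z \<le> 0 then 0 else max 0 W)"
          using h1[of 0] h2[of 0] by auto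
        ultimately show ?thesis using 3 z H[of y] h1[of z] by (simp add: Vf_def W_def)
      qed
    qed
  qed
qed



lemma c_facts:
  fixes \<delta> \<sigma> :: real
  assumes "0 < \<delta>" "\<delta> < 1"
  shows "1 - (1 - \<delta>) / (2 - \<delta>) = 1 / (2 - \<delta>)"
    "1 - 1 / (2 - \<delta>) * \<delta> = 2*(1-\<delta>)/(2-\<delta>)"
    "1 - 1 / (2 - \<delta>) * \<delta> * (1 - \<sigma>) = (2*(1-\<delta>)+\<delta>*\<sigma>)/(2-\<delta>)"
proof -
  have ne: "2 - \<delta> \<noteq> 0" using assms by simp
  show "1 - (1 - \<delta>) / (2 - \<delta>) = 1 / (2 - \<delta>)" using ne by (simp add: field_simps)
  show "1 - 1 / (2 - \<delta>) * \<delta> = 2*(1-\<delta>)/(2-\<delta>)" using ne by (simp add: field_simps)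
  show "1 - 1 / (2 - \<delta>) * \<delta> * (1 - \<sigma>) = (2*(1-\<delta>)+\<delta>*\<sigma>)/(2-\<delta>)" using ne by (simp add: field_simps)
qed

lemma quarter: "(m::real) > 0 \<Longrightarrow> m \<le> 4*X \<Longrightarrow> 1/4 \<le> X/m"
  by (simp add: le_divide_eq)

lemma dc: "(c::real) \<noteq> 0 \<Longrightarrow> (x/c)/(y/c) = x/y"
  by simp

lemma hU_c:
  assumes "0 < \<delta>" "\<delta> < 1"
  shows "hU \<kappa> \<delta> (\<lambda>y. (1 - \<delta>) / (2 - \<delta>)) t = ((1-\<delta>)*t - \<delta>*\<kappa>)/(2*(1-\<delta>))"
proof -
  have ne: "2 - \<delta> \<noteq> 0" "1 - \<delta> \<noteq> 0" using assms by auto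
  have "hU \<kappa> \<delta> (\<lambda>y. (1 - \<delta>) / (2 - \<delta>)) t = ((1-\<delta>)/(2-\<delta>)*t - 1/(2-\<delta>)*\<delta>*\<kappa>)/(2*(1-\<delta>)/(2-\<delta>))"
    by (simp only: hU_def c_facts[OF assms])
  also have "(1-\<delta>)/(2-\<delta>)*t - 1/(2-\<delta>)*\<delta>*\<kappa> = ((1-\<delta>)*t - \<delta>*\<kappa>)/(2-\<delta>)"
  proof -
    have "(1-\<delta>)/(2-\<delta>)*t = (1-\<delta>)*t/(2-\<delta>)" "1/(2-\<delta>)*\<delta>*\<kappa> = \<delta>*\<kappa>/(2-\<delta>)" by simp_all
    then show ?thesis by (simp only: diff_divide_distrib)
  qed
  also have "(((1-\<delta>)*t - \<delta>*\<kappa>)/(2-\<delta>))/(2*(1-\<delta>)/(2-\<delta>)) = ((1-\<delta>)*t - \<delta>*\<kappa>)/(2*(1-\<delta>))"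
    by (rule dc) (use ne in simp)
  finally show ?thesis .
qed

lemma mU_c:
  assumes "0 < \<delta>" "\<delta> < 1" "0 \<le> \<sigma>"
  shows "mU \<kappa> \<delta> (\<lambda>y. (1 - \<delta>) / (2 - \<delta>)) z \<sigma> y =
    (2*(1-\<delta>)*((1-\<delta>)*y-\<delta>*\<kappa>) + (\<delta>*\<sigma>)*((1-\<delta>)*z-\<delta>*\<kappa>)) / (2*(1-\<delta>)*(2*(1-\<delta>)+\<delta>*\<sigma>))"
proof -
  have ne: "2 - \<delta> \<noteq> 0" "1 - \<delta> \<noteq> 0" using assms by auto
  have "2*(1-\<delta>)+\<delta>*\<sigma> > 0" using assms by (smt (verit) mult_nonneg_nonneg)
  then have ne2: "2*(1-\<delta>)+\<delta>*\<sigma> \<noteq> 0" by simp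
  define N where "N = 2*(1-\<delta>)*((1-\<delta>)*y-\<delta>*\<kappa>) + (\<delta>*\<sigma>)*((1-\<delta>)*z-\<delta>*\<kappa>)"
  have "mU \<kappa> \<delta> (\<lambda>y. (1 - \<delta>) / (2 - \<delta>)) z \<sigma> y =
     ((1-\<delta>)/(2-\<delta>)*y + 1/(2-\<delta>)*\<delta>*(-\<kappa> + \<sigma>*(((1-\<delta>)*z - \<delta>*\<kappa>)/(2*(1-\<delta>)))))
      / ((2*(1-\<delta>)+\<delta>*\<sigma>)/(2-\<delta>))"
    by (simp only: mU_def c_facts[OF assms(1,2)] hU_c[OF assms(1,2)])
  also have "(1-\<delta>)/(2-\<delta>)*y + 1/(2-\<delta>)*\<delta>*(-\<kappa> + \<sigma>*(((1-\<delta>)*z - \<delta>*\<kappa>)/(2*(1-\<delta>))))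
     = ((1-\<delta>)*y + \<delta>*(-\<kappa> + \<sigma>*(((1-\<delta>)*z - \<delta>*\<kappa>)/(2*(1-\<delta>)))))/(2-\<delta>)"
    by (simp add: add_divide_distrib)
  also have "(1-\<delta>)*y + \<delta>*(-\<kappa> + \<sigma>*(((1-\<delta>)*z - \<delta>*\<kappa>)/(2*(1-\<delta>)))) = N / (2*(1-\<delta>))"
    unfolding N_def using ne(2) by (simp add: field_simps)
  also have "N / (2*(1-\<delta>)) / (2-\<delta>) / ((2*(1-\<delta>)+\<delta>*\<sigma>)/(2-\<delta>)) = N / (2*(1-\<delta>)) / (2*(1-\<delta>)+\<delta>*\<sigma>)"
    by (rule dc) (use ne in simp)
  also have "\<dots> = N / (2*(1-\<delta>)*(2*(1-\<delta>)+\<delta>*\<sigma>))" by simp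
  finally show ?thesis unfolding N_def .
qed

lemma lower_ratio:
  assumes k: "\<kappa> \<ge> 0" and d: "0 < \<delta>" "\<delta> < 1" and x0: "x0 > 0" "x0 \<ge> 2 * \<delta> * \<kappa> / (1 - \<delta>)"
    and y: "x0 \<le> y" and z: "0 \<le> z" and s: "0 \<le> \<sigma>" "\<sigma> \<le> 1"
  shows "1/4 \<le> Uf \<kappa> \<delta> (\<lambda>y. (1 - \<delta>) / (2 - \<delta>)) z \<sigma> y / Vf \<kappa> \<delta> z \<sigma> y"
proof -
  define a where "a = 1 - \<delta>"
  define b where "b = \<delta> * \<sigma>"
  define K where "K = \<delta> * \<kappa>"
  have a: "a > 0" using d a_def by simp
  have b: "b \<ge> 0" using d s b_def by simp
  have K: "K \<ge> 0" using d k K_def by simp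
  have ypos: "y > 0" using x0 y by simp
  have "2*K \<le> a * x0" using x0(2) a unfolding a_def K_def by (simp add: field_simps)
  moreover have "a * x0 \<le> a * y" using a y by simp
  ultimately have aK: "2*K \<le> a*y" by linarith
  show ?thesis
  proof (cases "z \<le> y")
    case True
    then have "Uf \<kappa> \<delta> (\<lambda>y. (1 - \<delta>) / (2 - \<delta>)) z \<sigma> y / Vf \<kappa> \<delta> z \<sigma> y = (a*y - K)/(2*a) / y"
      unfolding Uf_def Vf_def using hU_c[OF d] a_def K_def by simp
    also have "\<dots> \<ge> 1/4" using a ypos aK by (simp add: field_simps)
    finally show ?thesis .
  next
    case False
    have yz: "y < z" using False by simp
    define N where "N = 2*a*(a*y-K) + b*(a*z-K)"
    have den: "2*a*(2*a+b) > 0" using a b by simp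
    have U: "Uf \<kappa> \<delta> (\<lambda>y. (1 - \<delta>) / (2 - \<delta>)) z \<sigma> y = N / (2*a*(2*a+b))"
      unfolding Uf_def using False ypos mU_c[OF d s(1)] unfolding N_def a_def b_def K_def by simp
    have W: "Wst \<kappa> \<delta> z \<sigma> = (b*z - K)/(a+b)" unfolding Wst_def a_def b_def K_def
      by (simp add: algebra_simps)
    have V: "Vf \<kappa> \<delta> z \<sigma> y = max y ((b*z - K)/(a+b))" unfolding Vf_def using False ypos W by simp
    have "y \<le> 4 * (N / (2*a*(2*a+b)))"
      using P1[OF a b K aK yz] False den unfolding N_def by (simp add: field_simps)
    moreover have "(b*z - K)/(a+b) \<le> 4 * (N / (2*a*(2*a+b)))"
      using P2[OF a b K aK yz] False den a b unfolding N_def by (simp add: field_simps)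
    ultimately have "max y ((b*z - K)/(a+b)) \<le> 4 * (N / (2*a*(2*a+b)))" by simp
    moreover have "max y ((b*z - K)/(a+b)) > 0" using ypos by simp
    ultimately show ?thesis unfolding U V by (intro quarter)
  qed
qed



lemma upper_ratio:
  fixes p :: "real \<Rightarrow> real"
  assumes st: "stationary_rule p" and k: "\<kappa> \<ge> 0" and d: "0 < \<delta>" "\<delta> < 1"
    and y: "0 < y" and yz: "y < z" and s: "0 < \<sigma>" "\<sigma> \<le> 1"
    and M: "M = \<sigma> * z" and Mk: "\<kappa> < M"
    and G: "(1 - p y / (1 - (1 - p y) * \<delta>)) * (p z / (1 - (1 - p z) * \<delta>)) \<le> Gb"
    and Gb0: "0 \<le> Gb" and e: "0 < \<epsilon>"
    and h1: "y + \<delta> * \<kappa> * (Gb + \<epsilon>) \<le> \<epsilon> * \<delta> * M"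
    and h2: "\<delta> * \<sigma> \<le> \<epsilon> * (1 - \<delta>)"
  shows "Uf \<kappa> \<delta> p z \<sigma> y / Vf \<kappa> \<delta> z \<sigma> y \<le> (Gb + \<epsilon>) * (1 + \<epsilon>)"
proof -
  define q where "q = p y"
  define q' where "q' = p z"
  have q: "0 \<le> q" "q \<le> 1" "0 \<le> q'" "q' \<le> 1" using st unfolding stationary_rule_def q_def q'_def by auto
  define D0 where "D0 = 1 - (1 - q) * \<delta>"
  define Dz where "Dz = 1 - (1 - q') * \<delta>"
  define Dm where "Dm = 1 - (1 - q) * \<delta> * (1 - \<sigma>)"
  define gz where "gz = q' / Dz"
  define gy where "gy = q / D0"
  have "(1 - q) * \<delta> \<le> \<delta>" using q d by (intro mult_left_le_one_le) auto
  then have D0: "1 - \<delta> \<le> D0" "0 < D0" unfolding D0_def using d by linarith+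
  have "(1 - q') * \<delta> \<le> \<delta>" using q d by (intro mult_left_le_one_le) auto
  then have Dz: "0 < Dz" unfolding Dz_def using d by linarith
  have "(1 - q) * \<delta> * (1 - \<sigma>) \<le> (1 - q) * \<delta>" using q d s by (intro mult_right_le_one_le) auto
  then have Dm: "D0 \<le> Dm" unfolding D0_def Dm_def by linarith
  have z0: "0 \<le> z" using y yz by simp
  have hz: "hU \<kappa> \<delta> p z \<le> gz * z"
  proof -
    have "hU \<kappa> \<delta> p z = (q' * z - (1 - q') * \<delta> * \<kappa>) / Dz" unfolding hU_def q'_def Dz_def ..
    also have "\<dots> \<le> (q' * z) / Dz" using Dz q d k by (intro divide_right_mono) auto
    also have "\<dots> = gz * z" unfolding gz_def by simp
    finally show ?thesis .
  qed
  define N where "N = q * y + (1 - q) * \<delta> * (- \<kappa> + \<sigma> * hU \<kappa> \<delta> p z)"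
  have U: "Uf \<kappa> \<delta> p z \<sigma> y = N / Dm"
    using yz y unfolding Uf_def mU_def N_def Dm_def q_def by simp
  define W where "W = Wst \<kappa> \<delta> z \<sigma>"
  have V: "Vf \<kappa> \<delta> z \<sigma> y = max y W" using yz y unfolding Vf_def W_def by simp
  have Vpos: "max y W > 0" using y by simp
  have RHS: "0 \<le> (Gb + \<epsilon>) * (1 + \<epsilon>)" using Gb0 e by simp
  show ?thesis
  proof (cases "N \<le> 0")
    case True
    have "N / Dm \<le> 0" using True Dm D0 by (simp add: divide_nonpos_pos)
    then have "N / Dm / max y W \<le> 0" using Vpos by (rule divide_nonpos_pos)
    then show ?thesis unfolding U V using RHS by linarith
  next
    case False
    have Dden: "0 < 1 - \<delta> + \<delta> * \<sigma>" using d s by (smt (verit) mult_pos_pos)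
    have Wv: "W = \<delta> * (M - \<kappa>) / (1 - \<delta> + \<delta> * \<sigma>)" unfolding W_def Wst_def M by simp
    have Wpos: "W > 0" unfolding Wv using Dden d Mk by simp
    have "q * y \<le> y" using q y by (intro mult_left_le_one_le) auto
    moreover have "\<sigma> * hU \<kappa> \<delta> p z \<le> \<sigma> * (gz * z)" using hz s by (simp add: mult_left_mono)
    then have "- \<kappa> + \<sigma> * hU \<kappa> \<delta> p z \<le> M * gz" using k M by (simp add: algebra_simps)
    then have "(1 - q) * \<delta> * (- \<kappa> + \<sigma> * hU \<kappa> \<delta> p z) \<le> (1 - q) * \<delta> * (M * gz)"
      using q d by (intro mult_left_mono) auto
    ultimately have Nle: "N \<le> y + (1 - q) * \<delta> * (M * gz)" unfolding N_def by linarith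
    have "N / Dm \<le> N / D0" using False D0 Dm by (intro divide_left_mono) auto
    also have "\<dots> \<le> (y + (1 - q) * \<delta> * (M * gz)) / D0" using Nle D0 by (intro divide_right_mono) auto
    also have "\<dots> = y / D0 + \<delta> * M * ((1 - q) / D0) * gz" by (simp add: add_divide_distrib)
    also have "(1 - q) / D0 = (1 - gy) / (1 - \<delta>)"
    proof -
      have "1 - gy = (D0 - q) / D0" unfolding gy_def using D0(2) by (simp add: diff_divide_distrib)
      also have "D0 - q = (1 - q) * (1 - \<delta>)" unfolding D0_def by (simp add: algebra_simps)
      finally have "(1 - gy) / (1 - \<delta>) = (1 - q) * (1 - \<delta>) / D0 / (1 - \<delta>)" by simp
      also have "\<dots> = (1 - q) / D0" using d by simp
      finally show ?thesis by simp
    qed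
    also have "y / D0 \<le> y / (1 - \<delta>)" using D0 y d by (intro divide_left_mono) auto
    also have "\<delta> * M * ((1 - gy) / (1 - \<delta>)) * gz = \<delta> * M * ((1 - gy) * gz) / (1 - \<delta>)" by simp
    also have "(1 - gy) * gz \<le> Gb" using G unfolding gy_def gz_def q_def q'_def D0_def Dz_def .
    finally have Ule: "N / Dm \<le> (y + \<delta> * M * Gb) / (1 - \<delta>)"
      using d Mk k by (simp add: add_divide_distrib divide_right_mono mult_left_mono)
    have U0: "0 \<le> N / Dm" using False Dm D0 by simp
    have "N / Dm / max y W \<le> N / Dm / W" using U0 Wpos by (intro divide_left_mono) auto
    also have "\<dots> \<le> ((y + \<delta> * M * Gb) / (1 - \<delta>)) / W" using Ule Wpos by (intro divide_right_mono) auto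
    also have "\<dots> = ((y + \<delta> * M * Gb) / (\<delta> * (M - \<kappa>))) * ((1 - \<delta> + \<delta> * \<sigma>) / (1 - \<delta>))"
      unfolding Wv using d Mk Dden by (simp add: field_simps)
    also have "\<dots> \<le> (Gb + \<epsilon>) * (1 + \<epsilon>)"
    proof (rule mult_mono)
      have "y + \<delta> * M * Gb \<le> (Gb + \<epsilon>) * (\<delta> * (M - \<kappa>))" using h1 by (simp add: algebra_simps)
      then show "(y + \<delta> * M * Gb) / (\<delta> * (M - \<kappa>)) \<le> Gb + \<epsilon>" using d Mk by (simp add: pos_divide_le_eq)
      have "1 - \<delta> + \<delta> * \<sigma> \<le> (1 + \<epsilon>) * (1 - \<delta>)" using h2 by (simp add: algebra_simps)
      then show "(1 - \<delta> + \<delta> * \<sigma>) / (1 - \<delta>) \<le> 1 + \<epsilon>" using d by (simp add: pos_divide_le_eq)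
      show "0 \<le> Gb + \<epsilon>" using Gb0 e by simp
      show "0 \<le> (1 - \<delta> + \<delta> * \<sigma>) / (1 - \<delta>)" using Dden d by simp
    qed
    finally show ?thesis unfolding U V .
  qed
qed



lemma le_div_small: "0 \<le> (A::real) \<Longrightarrow> 0 < c \<Longrightarrow> c \<le> 1 \<Longrightarrow> A \<le> A / c"
  by (simp add: le_divide_eq mult_right_le_one_le)

lemma hU_lb:
  assumes st: "stationary_rule p" and k: "\<kappa> \<ge> 0" and d: "0 < \<delta>" "\<delta> < 1" and t: "0 \<le> t"
  shows "- (\<delta> * \<kappa> / (1 - \<delta>)) \<le> hU \<kappa> \<delta> p t"
proof -
  have q: "0 \<le> p t" "p t \<le> 1" using st unfolding stationary_rule_def by auto
  define Dt where "Dt = 1 - (1 - p t) * \<delta>"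
  have "(1 - p t) * \<delta> \<le> \<delta>" using q d by (intro mult_left_le_one_le) auto
  then have Dt: "1 - \<delta> \<le> Dt" "0 < Dt" unfolding Dt_def using d by linarith+
  have "(1 - p t) * \<delta> * \<kappa> \<le> \<delta> * \<kappa>" using q d k by (intro mult_right_mono mult_left_le_one_le) auto
  moreover have "0 \<le> p t * t" using q t by simp
  ultimately have num: "- (\<delta> * \<kappa>) \<le> p t * t - (1 - p t) * \<delta> * \<kappa>" by linarith
  have "- (\<delta> * \<kappa> / (1 - \<delta>)) \<le> - (\<delta> * \<kappa> / Dt)"
    using Dt d k by (simp add: divide_left_mono)
  also have "\<dots> = (- (\<delta> * \<kappa>)) / Dt" by simp
  also have "\<dots> \<le> (p t * t - (1 - p t) * \<delta> * \<kappa>) / Dt" using num Dt by (intro divide_right_mono) auto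
  also have "\<dots> = hU \<kappa> \<delta> p t" unfolding hU_def Dt_def ..
  finally show ?thesis .
qed

lemma Uf_lb:
  assumes st: "stationary_rule p" and k: "\<kappa> \<ge> 0" and d: "0 < \<delta>" "\<delta> < 1" and y: "0 \<le> y"
    and z: "0 \<le> z" and s: "0 \<le> \<sigma>" "\<sigma> \<le> 1"
  shows "- (\<delta> * \<kappa> / (1 - \<delta>)^2) \<le> Uf \<kappa> \<delta> p z \<sigma> y"
proof (cases "z \<le> y")
  case True
  have "\<delta> * \<kappa> / (1 - \<delta>) \<le> \<delta> * \<kappa> / (1 - \<delta>) / (1 - \<delta>)"
    using d k by (intro le_div_small) auto
  then have "- (\<delta> * \<kappa> / (1 - \<delta>)^2) \<le> - (\<delta> * \<kappa> / (1 - \<delta>))" by (simp add: power2_eq_square)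
  also have "\<dots> \<le> hU \<kappa> \<delta> p y" using hU_lb[OF st k d y] .
  finally show ?thesis using True unfolding Uf_def by simp
next
  case False
  define q where "q = p y"
  have q: "0 \<le> q" "q \<le> 1" using st unfolding stationary_rule_def q_def by auto
  define Dm where "Dm = 1 - (1 - q) * \<delta> * (1 - \<sigma>)"
  have "(1 - q) * (1 - \<sigma>) \<le> 1" using q s by (intro mult_le_one) auto
  then have "(1 - q) * (1 - \<sigma>) * \<delta> \<le> \<delta>" using d q s by (intro mult_left_le_one_le) auto
  then have Dm: "1 - \<delta> \<le> Dm" "0 < Dm" unfolding Dm_def using d by (simp_all add: algebra_simps)
  define K where "K = \<delta> * \<kappa> / (1 - \<delta>)"
  have K0: "0 \<le> K" unfolding K_def using d k by simp
  have hz: "- K \<le> hU \<kappa> \<delta> p z" unfolding K_def using hU_lb[OF st k d z] .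
  have "- K \<le> \<sigma> * hU \<kappa> \<delta> p z"
  proof (cases "hU \<kappa> \<delta> p z \<ge> 0")
    case True
    then have "0 \<le> \<sigma> * hU \<kappa> \<delta> p z" using s by simp
    then show ?thesis using K0 by linarith
  next
    case False
    have "\<sigma> * hU \<kappa> \<delta> p z \<ge> 1 * hU \<kappa> \<delta> p z" using False s by (intro mult_right_mono_neg) auto
    then show ?thesis using hz by simp
  qed
  then have X: "- (\<kappa> + K) \<le> - \<kappa> + \<sigma> * hU \<kappa> \<delta> p z" by simp
  have KK: "\<kappa> + K = \<kappa> / (1 - \<delta>)" unfolding K_def using d by (simp add: field_simps)
  have "(1 - q) * \<delta> * (- (\<kappa> + K)) \<le> (1 - q) * \<delta> * (- \<kappa> + \<sigma> * hU \<kappa> \<delta> p z)"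
    using X q d by (intro mult_left_mono) auto
  moreover have "(1 - q) * \<delta> * (\<kappa> + K) \<le> \<delta> * (\<kappa> + K)"
    using q d K0 k by (intro mult_right_mono mult_left_le_one_le) auto
  moreover have "0 \<le> q * y" using q y by simp
  ultimately have num: "- (\<delta> * (\<kappa> + K)) \<le> q * y + (1 - q) * \<delta> * (- \<kappa> + \<sigma> * hU \<kappa> \<delta> p z)"
    by (simp add: algebra_simps)
  have dk: "\<delta> * (\<kappa> + K) = \<delta> * \<kappa> / (1 - \<delta>)" unfolding KK by simp
  have "- (\<delta> * \<kappa> / (1 - \<delta>)^2) = - (\<delta> * \<kappa> / (1 - \<delta>) / (1 - \<delta>))" by (simp add: power2_eq_square)
  also have "\<dots> \<le> - (\<delta> * \<kappa> / (1 - \<delta>) / Dm)"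
    using Dm d k by (simp add: divide_left_mono)
  also have "\<dots> = (- (\<delta> * (\<kappa> + K))) / Dm" using dk by simp
  also have "\<dots> \<le> (q * y + (1 - q) * \<delta> * (- \<kappa> + \<sigma> * hU \<kappa> \<delta> p z)) / Dm"
    using num Dm by (intro divide_right_mono) auto
  also have "\<dots> = Uf \<kappa> \<delta> p z \<sigma> y" using False y unfolding Uf_def mU_def Dm_def q_def by simp
  finally show ?thesis .
qed

lemma Vf_ge: "0 \<le> y \<Longrightarrow> y \<le> Vf \<kappa> \<delta> z \<sigma> y"
  unfolding Vf_def by simp

lemma ratio_lb:
  assumes st: "stationary_rule p" and k: "\<kappa> \<ge> 0" and d: "0 < \<delta>" "\<delta> < 1"
    and x0: "0 < x0" "x0 \<le> y" and z: "0 \<le> z" and s: "0 \<le> \<sigma>" "\<sigma> \<le> 1"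
  shows "- (\<delta> * \<kappa> / (1 - \<delta>)^2) / x0 \<le> Uf \<kappa> \<delta> p z \<sigma> y / Vf \<kappa> \<delta> z \<sigma> y"
proof -
  define L where "L = \<delta> * \<kappa> / (1 - \<delta>)^2"
  have L0: "0 \<le> L" unfolding L_def using d k by simp
  have y: "0 < y" using x0 by simp
  have V: "y \<le> Vf \<kappa> \<delta> z \<sigma> y" using Vf_ge[of y] y by simp
  have U: "- L \<le> Uf \<kappa> \<delta> p z \<sigma> y" unfolding L_def using Uf_lb[OF st k d _ z s] y by simp
  show ?thesis
  proof (cases "0 \<le> Uf \<kappa> \<delta> p z \<sigma> y")
    case True
    have "- L / x0 \<le> 0" using L0 x0 by (simp add: divide_nonpos_pos)
    also have "0 \<le> Uf \<kappa> \<delta> p z \<sigma> y / Vf \<kappa> \<delta> z \<sigma> y" using True V y by simp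
    finally show ?thesis unfolding L_def .
  next
    case False
    have "- L / x0 \<le> - L / y" using L0 x0 by (simp add: divide_left_mono)
    also have "\<dots> \<le> Uf \<kappa> \<delta> p z \<sigma> y / y" using U y by (intro divide_right_mono) auto
    also have "\<dots> \<le> Uf \<kappa> \<delta> p z \<sigma> y / Vf \<kappa> \<delta> z \<sigma> y"
      using False V y by (intro divide_left_mono_neg) auto
    finally show ?thesis unfolding L_def .
  qed
qed



lemma binary_envs_elem:
  assumes "F \<in> binary_envs X" "X \<subseteq> {0..}"
  obtains z \<sigma> where "F = binary_env z \<sigma>" "z \<in> X" "0 \<le> z" "0 \<le> \<sigma>" "\<sigma> \<le> 1"
  using assms unfolding binary_envs_def by auto

lemma S_bdd_below:
  assumes st: "stationary_rule p" and k: "\<kappa> \<ge> 0" and d: "0 < \<delta>" "\<delta> < 1"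
    and x0: "0 < x0" and X: "X \<subseteq> {0..}"
  shows "bdd_below {U \<kappa> \<delta> p F y / V \<kappa> \<delta> F y | y F. x0 \<le> y \<and> F \<in> binary_envs X}"
proof (rule bdd_belowI)
  fix r assume "r \<in> {U \<kappa> \<delta> p F y / V \<kappa> \<delta> F y | y F. x0 \<le> y \<and> F \<in> binary_envs X}"
  then obtain y F where r: "r = U \<kappa> \<delta> p F y / V \<kappa> \<delta> F y" "x0 \<le> y" "F \<in> binary_envs X" by auto
  from binary_envs_elem[OF r(3) X] obtain z \<sigma> where F: "F = binary_env z \<sigma>" "0 \<le> z" "0 \<le> \<sigma>" "\<sigma> \<le> 1" by metis
  show "- (\<delta> * \<kappa> / (1 - \<delta>)^2) / x0 \<le> r"
    unfolding r(1) F(1) U_binary[OF st d F(2-4)] V_binary[OF k d F(2-4)]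
    using ratio_lb[OF st k d x0 r(2) F(2-4)] .
qed

lemma S_nonempty:
  assumes "0 \<in> X"
  shows "{U \<kappa> \<delta> p F y / V \<kappa> \<delta> F y | y F. x0 \<le> y \<and> F \<in> binary_envs X} \<noteq> {}"
proof -
  have "binary_env 0 0 \<in> binary_envs X" using assms unfolding binary_envs_def by (intro CollectI exI[of _ 0]) auto
  then show ?thesis by blast
qed

lemma part_a:
  assumes X: "X \<subseteq> {0..}" "0 \<in> X" and k: "\<kappa> \<ge> 0" and d: "0 < \<delta>" "\<delta> < 1"
    and x0: "x0 > 0" "x0 \<ge> 2 * \<delta> * \<kappa> / (1 - \<delta>)"
  shows "1/4 \<le> perf_ratio \<kappa> \<delta> X (\<lambda>y. (1 - \<delta>) / (2 - \<delta>)) x0"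
  unfolding perf_ratio_def
proof (rule cInf_greatest)
  show "{U \<kappa> \<delta> (\<lambda>y. (1 - \<delta>) / (2 - \<delta>)) F y / V \<kappa> \<delta> F y | y F. x0 \<le> y \<and> F \<in> binary_envs X} \<noteq> {}"
    using S_nonempty[OF X(2)] .
  have st: "stationary_rule (\<lambda>y. (1 - \<delta>) / (2 - \<delta>))" unfolding stationary_rule_def using d by auto
  fix r assume "r \<in> {U \<kappa> \<delta> (\<lambda>y. (1 - \<delta>) / (2 - \<delta>)) F y / V \<kappa> \<delta> F y | y F. x0 \<le> y \<and> F \<in> binary_envs X}"
  then obtain y F where r: "r = U \<kappa> \<delta> (\<lambda>y. (1 - \<delta>) / (2 - \<delta>)) F y / V \<kappa> \<delta> F y" "x0 \<le> y" "F \<in> binary_envs X" by auto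
  from binary_envs_elem[OF r(3) X(1)] obtain z \<sigma> where F: "F = binary_env z \<sigma>" "0 \<le> z" "0 \<le> \<sigma>" "\<sigma> \<le> 1" by metis
  show "1/4 \<le> r"
    unfolding r(1) F(1) U_binary[OF st d F(2-4)] V_binary[OF k d F(2-4)]
    using lower_ratio[OF k d x0 r(2) F(2-4)] .
qed



lemma part_b:
  assumes st: "stationary_rule p" and X: "X \<subseteq> {0..}" "0 \<in> X" "\<not> bdd_above X"
    and k: "\<kappa> \<ge> 0" and d: "0 < \<delta>" "\<delta> < 1" and x0: "x0 > 0"
  shows "perf_ratio \<kappa> \<delta> X p x0 \<le> 1/4"
proof (rule field_le_epsilon)
  fix e :: real assume e: "0 < e"
  define S where "S = {U \<kappa> \<delta> p F y / V \<kappa> \<delta> F y | y F. x0 \<le> y \<and> F \<in> binary_envs X}"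
  have Sb: "bdd_below S" unfolding S_def using S_bdd_below[OF st k d x0 X(1)] .
  define \<epsilon> where "\<epsilon> = min 1 (e / 5)"
  have eps: "0 < \<epsilon>" "\<epsilon> \<le> 1" "5 * \<epsilon> \<le> e" unfolding \<epsilon>_def using e by auto
  define gp where "gp t = p t / (1 - (1 - p t) * \<delta>)" for t
  have gp: "0 \<le> gp t \<and> gp t \<le> 1" for t
  proof -
    have q: "0 \<le> p t" "p t \<le> 1" using st unfolding stationary_rule_def by auto
    have "(1 - p t) * \<delta> \<le> 1 - p t" using q d by (intro mult_right_le_one_le) auto
    moreover have "(1 - p t) * \<delta> \<le> \<delta>" using q d by (intro mult_left_le_one_le) auto
    ultimately have "0 < 1 - (1 - p t) * \<delta>" "p t \<le> 1 - (1 - p t) * \<delta>" using d by linarith+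
    then show ?thesis unfolding gp_def using q by simp
  qed
  define s where "s = Sup (gp ` {x0..})"
  have ne: "gp ` {x0..} \<noteq> {}" by simp
  have bdd: "bdd_above (gp ` {x0..})" using gp by (intro bdd_aboveI[of _ 1]) auto
  have s_up: "gp t \<le> s" if "x0 \<le> t" for t unfolding s_def using bdd that by (intro cSup_upper) auto
  have s1: "s \<le> 1" unfolding s_def using ne gp by (intro cSup_least) auto
  have s0: "0 \<le> s" using s_up[of x0] gp[of x0] by simp
  have "s - \<epsilon> < s" using eps by simp
  then obtain y where y: "x0 \<le> y" "s - \<epsilon> < gp y" unfolding s_def using less_cSup_iff[OF ne bdd] by auto
  have ypos: "0 < y" using x0 y by simp
  define Gb where "Gb = 1/4 + \<epsilon>"
  have G: "(1 - gp y) * gp z \<le> Gb" if "x0 \<le> z" for z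
  proof -
    have "(1 - gp y) * gp z \<le> (1 - gp y) * s" using gp[of y] s_up[OF that] by (intro mult_left_mono) auto
    also have "\<dots> \<le> (1 - s + \<epsilon>) * s" using y s0 by (intro mult_right_mono) auto
    also have "\<dots> = 1/4 - (s - 1/2)^2 + \<epsilon> * s" by (simp add: algebra_simps power2_eq_square)
    also have "\<dots> \<le> 1/4 + \<epsilon>"
    proof -
      have "\<epsilon> * s \<le> \<epsilon>" using s1 s0 eps by (intro mult_right_le_one_le) auto
      moreover have "0 \<le> (s - 1/2)^2" by simp
      ultimately show ?thesis by linarith
    qed
    finally show ?thesis unfolding Gb_def .
  qed
  have Gb0: "0 \<le> Gb" unfolding Gb_def using eps by simp
  define M where "M = max (\<kappa> + 1) ((y + \<delta> * \<kappa> * (Gb + \<epsilon>)) / (\<epsilon> * \<delta>))"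
  have Mk: "\<kappa> < M" unfolding M_def by simp
  have M0: "0 < M" using Mk k by simp
  have h1: "y + \<delta> * \<kappa> * (Gb + \<epsilon>) \<le> \<epsilon> * \<delta> * M"
  proof -
    have "(y + \<delta> * \<kappa> * (Gb + \<epsilon>)) / (\<epsilon> * \<delta>) \<le> M" unfolding M_def by simp
    then show ?thesis using eps d by (simp add: pos_divide_le_eq mult.commute)
  qed
  define \<sigma>0 where "\<sigma>0 = \<epsilon> * (1 - \<delta>)"
  have s0pos: "0 < \<sigma>0" unfolding \<sigma>0_def using eps d by simp
  obtain z where z: "z \<in> X" "max (max y M) (M / \<sigma>0) < z"
    using X(3) unfolding bdd_above_def by (metis not_le)
  have zy: "y < z" "M < z" "M / \<sigma>0 < z" using z by auto
  have zpos: "0 < z" using zy M0 by simp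
  define \<sigma> where "\<sigma> = M / z"
  have sig: "0 < \<sigma>" "\<sigma> \<le> 1" unfolding \<sigma>_def using M0 zpos zy by auto
  have Mz: "M = \<sigma> * z" unfolding \<sigma>_def using zpos by simp
  have "M < z * \<sigma>0" using zy(3) s0pos by (simp add: pos_divide_less_eq)
  then have "M \<le> \<sigma>0 * z" by (simp add: mult.commute)
  then have "\<sigma> \<le> \<sigma>0" unfolding \<sigma>_def using zpos by (simp add: pos_divide_le_eq mult.commute)
  moreover have "\<delta> * \<sigma> \<le> \<sigma>" using d sig by (intro mult_left_le_one_le) auto
  ultimately have h2: "\<delta> * \<sigma> \<le> \<epsilon> * (1 - \<delta>)" unfolding \<sigma>0_def by linarith
  have Gz: "(1 - p y / (1 - (1 - p y) * \<delta>)) * (p z / (1 - (1 - p z) * \<delta>)) \<le> Gb"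
    using G[of z] zy y unfolding gp_def by simp
  have rat: "Uf \<kappa> \<delta> p z \<sigma> y / Vf \<kappa> \<delta> z \<sigma> y \<le> (Gb + \<epsilon>) * (1 + \<epsilon>)"
    using upper_ratio[OF st k d ypos zy(1) sig Mz Mk Gz Gb0 eps(1) h1 h2] .
  have "(Gb + \<epsilon>) * (1 + \<epsilon>) = 1/4 + \<epsilon> * (9/4) + 2 * (\<epsilon> * \<epsilon>)"
    unfolding Gb_def by (simp add: field_simps)
  also have "\<epsilon> * \<epsilon> \<le> \<epsilon>" using eps by (intro mult_left_le_one_le) auto
  then have "1/4 + \<epsilon> * (9/4) + 2 * (\<epsilon> * \<epsilon>) \<le> 1/4 + e" using eps by linarith
  finally have bnd: "(Gb + \<epsilon>) * (1 + \<epsilon>) \<le> 1/4 + e" .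
  have z0: "0 \<le> z" using zpos by simp
  have mem: "binary_env z \<sigma> \<in> binary_envs X" unfolding binary_envs_def using z(1) sig
    by (intro CollectI exI[of _ z] exI[of _ \<sigma>]) auto
  have "Uf \<kappa> \<delta> p z \<sigma> y / Vf \<kappa> \<delta> z \<sigma> y \<in> S"
    unfolding S_def U_binary[OF st d z0 less_imp_le[OF sig(1)] sig(2), symmetric]
      V_binary[OF k d z0 less_imp_le[OF sig(1)] sig(2), symmetric]
    using y(1) mem by blast
  then have "Inf S \<le> Uf \<kappa> \<delta> p z \<sigma> y / Vf \<kappa> \<delta> z \<sigma> y" using Sb by (rule cInf_lower)
  then show "perf_ratio \<kappa> \<delta> X p x0 \<le> 1/4 + e" using rat bnd unfolding perf_ratio_def S_def by linarith
qed

theorem theorem3: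
  fixes X :: "real set" and \<kappa> \<delta> x0 :: real
  assumes "X \<in> sets borel" and "X \<subseteq> {0..}" and "0 \<in> X"
    and "\<kappa> \<ge> 0" and "0 < \<delta>" and "\<delta> < 1"
    and "x0 > 0" and "x0 \<ge> 2 * \<delta> * \<kappa> / (1 - \<delta>)"
  shows "perf_ratio \<kappa> \<delta> X (\<lambda>y. (1 - \<delta>) / (2 - \<delta>)) x0 \<ge> 1/4 \<and>
    (\<not> bdd_above X \<longrightarrow> dynamically_robust \<kappa> \<delta> X (\<lambda>y. (1 - \<delta>) / (2 - \<delta>)) x0)"
proof
  have a: "1/4 \<le> perf_ratio \<kappa> \<delta> X (\<lambda>y. (1 - \<delta>) / (2 - \<delta>)) x0"
    using part_a[OF assms(2,3,4,5,6,7,8)] .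
  then show "perf_ratio \<kappa> \<delta> X (\<lambda>y. (1 - \<delta>) / (2 - \<delta>)) x0 \<ge> 1/4" by simp
  show "\<not> bdd_above X \<longrightarrow> dynamically_robust \<kappa> \<delta> X (\<lambda>y. (1 - \<delta>) / (2 - \<delta>)) x0"
  proof
    assume nb: "\<not> bdd_above X"
    have st: "stationary_rule (\<lambda>y. (1 - \<delta>) / (2 - \<delta>))" unfolding stationary_rule_def using assms(5,6) by auto
    have le: "perf_ratio \<kappa> \<delta> X p' x0 \<le> 1/4" if "stationary_rule p'" for p'
      using part_b[OF that assms(2,3) nb assms(4,5,6,7)] .
    have eq: "perf_ratio \<kappa> \<delta> X (\<lambda>y. (1 - \<delta>) / (2 - \<delta>)) x0 = 1/4" using a le[OF st] by linarith
    show "dynamically_robust \<kappa> \<delta> X (\<lambda>y. (1 - \<delta>) / (2 - \<delta>)) x0"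
      unfolding dynamically_robust_def
    proof (rule sym, rule cSup_eq_maximum)
      show "perf_ratio \<kappa> \<delta> X (\<lambda>y. (1 - \<delta>) / (2 - \<delta>)) x0 \<in> (\<lambda>p'. perf_ratio \<kappa> \<delta> X p' x0) ` {p'. stationary_rule p'}"
        using st by blast
      fix r assume "r \<in> (\<lambda>p'. perf_ratio \<kappa> \<delta> X p' x0) ` {p'. stationary_rule p'}"
      then obtain p' where p': "stationary_rule p'" "r = perf_ratio \<kappa> \<delta> X p' x0" by auto
      show "r \<le> perf_ratio \<kappa> \<delta> X (\<lambda>y. (1 - \<delta>) / (2 - \<delta>)) x0" using le[OF p'(1)] p'(2) eq by linarith
    qed
  qed
qed

end
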